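(* Let $V(x)$ be a real function, $\epsilon$ a real constant, and let $w(x)$ be a solution of the Riccati equation $$w'+w^2=V(x)-\epsilon .$$ Let $\gamma(x)$ be a never vanishing differentiable function defined on the domain of $V(x)$. If $v(x)$ is a solution of the Riccati equation $$v'+v^2=V(x)+\frac{1}{\gamma^2(x)}-\epsilon$$ which is defined on the same domain as $w(x)$ and such that $w(x)-v(x)$ does not vanish, then the function $$\overline w(x)=-v(x)-\frac{1/\gamma^2(x)}{w(x)-v(x)}+\frac{\gamma'(x)}{\gamma(x)}$$ is a solution of the Riccati equation $$\overline w'+\overline w^{\,2}=V(x)-2\left(\frac{\gamma'}{\gamma}\,v+v'\right)+\frac{\gamma''}{\gamma}-\epsilon .$$
   Context: Primes denote derivatives with respect to the real independent variable $x$. The function $\gamma$ is implicitly required to be twice differentiable, since $\gamma''$ appears in the conclusion. *)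

theory Defs
  imports Complex_Main
begin

end

theory Submission
  imports Defs
begin

lemma alg:
  fixes g g1 g2 w v w1 v1 V e :: real
  assumes g: "g \<noteq> 0" and u: "w - v \<noteq> 0" and "w1 + w\<^sup>2 = V - e" "v1 + v\<^sup>2 = V + 1/g\<^sup>2 - e"
  shows "(- v1 - ((0 * g\<^sup>2 - 1 * (2 * g * g1)) / (g\<^sup>2)\<^sup>2 * (w - v) - (1 / g\<^sup>2) * (w1 - v1)) / (w - v)\<^sup>2
      + (g2 * g - g1 * g1) / g\<^sup>2) + (- v - (1 / g\<^sup>2) / (w - v) + g1 / g)\<^sup>2
   = V - 2 * (g1 / g * v + v1) + g2 / g - e"
proof -
  define c where "c = 1/g\<^sup>2"
  define h where "h = g1/g"
  define a where "a = c/(w-v)"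
  have u1: "w1 - v1 = v\<^sup>2 - w\<^sup>2 - c" using assms unfolding c_def by simp
  have v1: "v1 = V + c - e - v\<^sup>2" using assms unfolding c_def by simp
  have K4: "(w-v)*a = c" using u unfolding a_def by simp
  have E1: "(0 * g\<^sup>2 - 1 * (2 * g * g1)) / (g\<^sup>2)\<^sup>2 = -2*h*c"
    using g unfolding h_def c_def by (simp add: field_simps power2_eq_square)
  have K1: "((0 * g\<^sup>2 - 1 * (2 * g * g1)) / (g\<^sup>2)\<^sup>2 * (w - v) - (1 / g\<^sup>2) * (w1 - v1)) / (w - v)\<^sup>2
     = -2*h*a + (w+v)*a + a\<^sup>2"
  proof -
    have "((0 * g\<^sup>2 - 1 * (2 * g * g1)) / (g\<^sup>2)\<^sup>2 * (w - v) - (1 / g\<^sup>2) * (w1 - v1)) / (w - v)\<^sup>2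
       = (-2*h*c * (w - v) - c * (v\<^sup>2 - w\<^sup>2 - c)) / (w - v)\<^sup>2"
      unfolding E1 u1 c_def by simp
    also have "\<dots> = (-2*h*c*(w-v) + (w+v)*c*(w-v) + c\<^sup>2) / (w - v)\<^sup>2"
      by (simp add: algebra_simps power2_eq_square)
    also have "\<dots> = -2*h*c*(w-v)/(w-v)\<^sup>2 + (w+v)*c*(w-v)/(w-v)\<^sup>2 + c\<^sup>2/(w-v)\<^sup>2"
      by (simp add: add_divide_distrib diff_divide_distrib)
    also have "\<dots> = -2*h*a + (w+v)*a + a\<^sup>2"
      unfolding a_def using u by (simp add: power2_eq_square)
    finally show ?thesis .
  qed
  have K2: "(g2 * g - g1 * g1) / g\<^sup>2 = g2/g - h\<^sup>2"
    using g unfolding h_def by (simp add: field_simps power2_eq_square)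
  have K3: "(1 / g\<^sup>2) / (w - v) = a" unfolding a_def c_def ..
  have "- v1 - (-2*h*a + (w+v)*a + a\<^sup>2) + (g2/g - h\<^sup>2) + (- v - a + h)\<^sup>2
      = V - 2 * (h * v + v1) + g2 / g - e"
  proof -
    have "- v1 - (-2*h*a + (w+v)*a + a\<^sup>2) + (g2/g - h\<^sup>2) + (- v - a + h)\<^sup>2
      - (V - 2 * (h * v + v1) + g2 / g - e) = c - (w-v)*a"
      unfolding v1 by (simp add: algebra_simps power2_eq_square)
    then show ?thesis using K4 by linarith
  qed
  then show ?thesis unfolding K1 K2 K3 h_def[symmetric] .
qed


theorem theorem2:
  fixes V w w' v v' \<gamma> \<gamma>' \<gamma>'' :: "real \<Rightarrow> real"
    and \<epsilon> :: real and D :: "real set"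
  assumes D_open: "open D"
    and w_deriv: "\<And>x. x \<in> D \<Longrightarrow> (w has_real_derivative w' x) (at x)"
    and w_riccati: "\<And>x. x \<in> D \<Longrightarrow> w' x + (w x)\<^sup>2 = V x - \<epsilon>"
    and \<gamma>_nonzero: "\<And>x. x \<in> D \<Longrightarrow> \<gamma> x \<noteq> 0"
    and \<gamma>_deriv: "\<And>x. x \<in> D \<Longrightarrow> (\<gamma> has_real_derivative \<gamma>' x) (at x)"
    and \<gamma>'_deriv: "\<And>x. x \<in> D \<Longrightarrow> (\<gamma>' has_real_derivative \<gamma>'' x) (at x)"
    and v_deriv: "\<And>x. x \<in> D \<Longrightarrow> (v has_real_derivative v' x) (at x)"
    and v_riccati: "\<And>x. x \<in> D \<Longrightarrow> v' x + (v x)\<^sup>2 = V x + 1 / (\<gamma> x)\<^sup>2 - \<epsilon>"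
    and wv_nonzero: "\<And>x. x \<in> D \<Longrightarrow> w x - v x \<noteq> 0"
  shows "\<forall>x\<in>D. \<exists>d.
           ((\<lambda>y. - v y - (1 / (\<gamma> y)\<^sup>2) / (w y - v y) + \<gamma>' y / \<gamma> y) has_real_derivative d) (at x)
         \<and> d + (- v x - (1 / (\<gamma> x)\<^sup>2) / (w x - v x) + \<gamma>' x / \<gamma> x)\<^sup>2
             = V x - 2 * (\<gamma>' x / \<gamma> x * v x + v' x) + \<gamma>'' x / \<gamma> x - \<epsilon>"
proof
  fix x assume x: "x \<in> D"
  note nz = \<gamma>_nonzero[OF x] wv_nonzero[OF x]
  have der: "((\<lambda>y. - v y - (1 / (\<gamma> y)\<^sup>2) / (w y - v y) + \<gamma>' y / \<gamma> y) has_real_derivative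
     (- v' x - ((0 * (\<gamma> x)\<^sup>2 - 1 * (2 * \<gamma> x * \<gamma>' x)) / ((\<gamma> x)\<^sup>2)\<^sup>2 * (w x - v x) - (1 / (\<gamma> x)\<^sup>2) * (w' x - v' x)) / (w x - v x)\<^sup>2
      + (\<gamma>'' x * \<gamma> x - \<gamma>' x * \<gamma>' x) / (\<gamma> x)\<^sup>2)) (at x)"
  proof -
    have a: "((\<lambda>y. 1 / (\<gamma> y)\<^sup>2) has_real_derivative (0 * (\<gamma> x)\<^sup>2 - 1 * (2 * \<gamma> x * \<gamma>' x)) / ((\<gamma> x)\<^sup>2)\<^sup>2) (at x)"
      using DERIV_divide[OF DERIV_const[of 1] DERIV_power[OF \<gamma>_deriv[OF x], of 2]] nz by (simp add: power2_eq_square mult.commute)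
    have b: "((\<lambda>y. (1 / (\<gamma> y)\<^sup>2) / (w y - v y)) has_real_derivative
      ((0 * (\<gamma> x)\<^sup>2 - 1 * (2 * \<gamma> x * \<gamma>' x)) / ((\<gamma> x)\<^sup>2)\<^sup>2 * (w x - v x) - (1 / (\<gamma> x)\<^sup>2) * (w' x - v' x)) / (w x - v x)\<^sup>2) (at x)"
      using DERIV_divide[OF a DERIV_diff[OF w_deriv[OF x] v_deriv[OF x]]] nz by (simp add: power2_eq_square)
    have c: "((\<lambda>y. \<gamma>' y / \<gamma> y) has_real_derivative (\<gamma>'' x * \<gamma> x - \<gamma>' x * \<gamma>' x) / (\<gamma> x)\<^sup>2) (at x)"
      using DERIV_divide[OF \<gamma>'_deriv[OF x] \<gamma>_deriv[OF x]] nz by (simp add: power2_eq_square)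
    show ?thesis using DERIV_add[OF DERIV_diff[OF DERIV_minus[OF v_deriv[OF x]] b] c] by simp
  qed
  show "\<exists>d. ((\<lambda>y. - v y - (1 / (\<gamma> y)\<^sup>2) / (w y - v y) + \<gamma>' y / \<gamma> y) has_real_derivative d) (at x)
         \<and> d + (- v x - (1 / (\<gamma> x)\<^sup>2) / (w x - v x) + \<gamma>' x / \<gamma> x)\<^sup>2
             = V x - 2 * (\<gamma>' x / \<gamma> x * v x + v' x) + \<gamma>'' x / \<gamma> x - \<epsilon>"
    using der alg[OF nz w_riccati[OF x] v_riccati[OF x]] by blast
qed

end
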